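(* Let $x^*\in X$ satisfy $\langle F(x^* ),x-x^*\rangle\ge0$ for all $x\in X$ and, for some $\mu>0$, $\langle F(x),x-x^*\rangle\ge2\mu V(x,x^* )$ for all $x\in X$. Run the SBOE method with $p_i=\frac1b$ for all $i$ and, for all $t$, $$\gamma_t=\gamma=\frac1{2\bar Lb},\qquad\lambda_t=\frac{b+2(b-1)\mu\gamma}{1+2\mu\gamma},\qquad\theta_t=\Big(\frac{1+2\mu\gamma}{1+2\mu\gamma(b-1)/b}\Big)^t.$$ Then $$\mathbb{E}[V(x_{k+1},x^* )]\le2\Big(\frac{1+2\mu\frac{b-1}{b}\gamma}{1+2\mu\gamma}\Big)^k\Big[V(x_1,x^* )+\frac{b-1}{b}\gamma\langle F(x_1),x_1-x^*\rangle\Big],$$ where the expectation is over $i_1,\dots,i_k$.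
   Context: Let $X=X_1\times\cdots\times X_b\subseteq\mathbb{R}^n$, where each $X_i\subseteq\mathbb{R}^{n_i}$ is nonempty closed convex and $n_1+\dots+n_b=n$; write $x=(x^{(1)},\dots,x^{(b)})$. Each $\mathbb{R}^{n_i}$ carries a norm $\|\cdot\|_i$ with dual norm $\|\cdot\|_{i,*}$; on $\mathbb{R}^n$ set $\|x\|^2=\sum_i\|x^{(i)}\|_i^2$ and $\|y\|_*^2=\sum_i\|y^{(i)}\|_{i,*}^2$. For $F:X\to\mathbb{R}^n$ let $F_i(x)$ be its $i$-th block; assume $\|F_i(x_1)-F_i(x_2)\|_{i,*}\le\bar L\|x_1-x_2\|$ for all $i$ and $x_1,x_2\in X$. For each $i$ let $\omega_i$ be strongly convex with modulus $1$ w.r.t. $\|\cdot\|_i$ on $X_i$, $V_i(u,v)=\omega_i(v)-\omega_i(u)-\langle\omega_i'(u),v-u\rangle$, and $V(x,y)=\sum_iV_i(x^{(i)},y^{(i)})$. SBOE method: given $x_0=x_1\in X$, nonnegative $\{\gamma_t\},\{\lambda_t\}$ and probabilities $p_1,\dots,p_b$; for $t=1,\dots,k$ draw $i_t$ with $\mathbb{P}(i_t=i)=p_i$ independently of the past, set $x_{t+1}^{(i_t)}=\operatorname{argmin}_{u\in X_{i_t}}\gamma_t\langle F_{i_t}(x_t)+\lambda_t(F_{i_t}(x_t)-F_{i_t}(x_{t-1})),u\rangle+V_{i_t}(x_t^{(i_t)},u)$ and $x_{t+1}^{(i)}=x_t^{(i)}$ for $i\ne i_t$. *)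

theory Defs
  imports "HOL-Analysis.Analysis" "HOL-Probability.Probability"
begin

text \<open>The block structure is given by
  blk :: 'n => nat assigning each coordinate to a block in {0..<b}
  (blocks are 0-indexed). Block i of a vector is its orthogonal projection onto
  the coordinates of block i; R^{n_i} is identified with blk_space blk i.\<close>

definition blk_proj :: "('n \<Rightarrow> nat) \<Rightarrow> nat \<Rightarrow> real^'n \<Rightarrow> real^'n" where
  "blk_proj blk i x = (\<chi> j. if blk j = i then x $ j else 0)"

definition blk_space :: "('n \<Rightarrow> nat) \<Rightarrow> nat \<Rightarrow> (real^'n) set" where
  "blk_space blk i = {x. \<forall>j. blk j \<noteq> i \<longrightarrow> x $ j = 0}"

definition prod_set :: "('n \<Rightarrow> nat) \<Rightarrow> nat \<Rightarrow> (nat \<Rightarrow> (real^'n) set) \<Rightarrow> (real^'n) set" where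
  "prod_set blk b Xs = {x. \<forall>i<b. blk_proj blk i x \<in> Xs i}"

definition is_norm_on :: "'a::real_vector set \<Rightarrow> ('a \<Rightarrow> real) \<Rightarrow> bool" where
  "is_norm_on S N \<longleftrightarrow>
     (\<forall>x\<in>S. N x \<ge> 0 \<and> (N x = 0 \<longleftrightarrow> x = 0)) \<and>
     (\<forall>x\<in>S. \<forall>c. N (c *\<^sub>R x) = \<bar>c\<bar> * N x) \<and>
     (\<forall>x\<in>S. \<forall>y\<in>S. N (x + y) \<le> N x + N y)"

definition dual_norm :: "'a::real_inner set \<Rightarrow> ('a \<Rightarrow> real) \<Rightarrow> 'a \<Rightarrow> real" where
  "dual_norm S N y = Sup {inner y u | u. u \<in> S \<and> N u \<le> 1}"

definition blk_norm :: "nat \<Rightarrow> ('n \<Rightarrow> nat) \<Rightarrow> (nat \<Rightarrow> real^'n \<Rightarrow> real) \<Rightarrow> real^'n \<Rightarrow> real" where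
  "blk_norm b blk N x = sqrt (\<Sum>i<b. (N i (blk_proj blk i x))\<^sup>2)"

definition strongly_convex1 :: "'a::real_inner set \<Rightarrow> ('a \<Rightarrow> real) \<Rightarrow> ('a \<Rightarrow> real) \<Rightarrow> ('a \<Rightarrow> 'a) \<Rightarrow> bool" where
  "strongly_convex1 S N \<omega> \<omega>' \<longleftrightarrow>
     (\<forall>u\<in>S. \<forall>v\<in>S. \<omega> v \<ge> \<omega> u + inner (\<omega>' u) (v - u) + 1/2 * (N (v - u))\<^sup>2)"

definition bregman :: "('a::real_inner \<Rightarrow> real) \<Rightarrow> ('a \<Rightarrow> 'a) \<Rightarrow> 'a \<Rightarrow> 'a \<Rightarrow> real" where
  "bregman \<omega> \<omega>' u v = \<omega> v - \<omega> u - inner (\<omega>' u) (v - u)"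

definition blk_V :: "nat \<Rightarrow> ('n \<Rightarrow> nat) \<Rightarrow> (nat \<Rightarrow> real^'n \<Rightarrow> real) \<Rightarrow> (nat \<Rightarrow> real^'n \<Rightarrow> real^'n)
    \<Rightarrow> real^'n \<Rightarrow> real^'n \<Rightarrow> real" where
  "blk_V b blk \<omega> \<omega>' x y = (\<Sum>i<b. bregman (\<omega> i) (\<omega>' i) (blk_proj blk i x) (blk_proj blk i y))"

definition prox :: "'a::real_inner set \<Rightarrow> ('a \<Rightarrow> real) \<Rightarrow> ('a \<Rightarrow> 'a) \<Rightarrow> real \<Rightarrow> 'a \<Rightarrow> 'a \<Rightarrow> 'a" where
  "prox Xi \<omega> \<omega>' gam g xi = (SOME u. u \<in> Xi \<and>
      (\<forall>v\<in>Xi. gam * inner g u + bregman \<omega> \<omega>' xi u \<le> gam * inner g v + bregman \<omega> \<omega>' xi v))"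

text \<open>SBOE states: sboe_st ... seq t = (x_t, x_{t+1}), where seq t = i_t (t >= 1).\<close>
primrec sboe_st :: "('n \<Rightarrow> nat) \<Rightarrow> (nat \<Rightarrow> (real^'n) set) \<Rightarrow> (nat \<Rightarrow> real^'n \<Rightarrow> real)
    \<Rightarrow> (nat \<Rightarrow> real^'n \<Rightarrow> real^'n) \<Rightarrow> (real^'n \<Rightarrow> real^'n) \<Rightarrow> (nat \<Rightarrow> real) \<Rightarrow> (nat \<Rightarrow> real)
    \<Rightarrow> real^'n \<Rightarrow> (nat \<Rightarrow> nat) \<Rightarrow> nat \<Rightarrow> (real^'n) \<times> (real^'n)" where
  "sboe_st blk Xs \<omega> \<omega>' F gam lam x1 seq 0 = (x1, x1)"
| "sboe_st blk Xs \<omega> \<omega>' F gam lam x1 seq (Suc t) =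
     (let (xp, xc) = sboe_st blk Xs \<omega> \<omega>' F gam lam x1 seq t;
          i = seq (Suc t);
          g = blk_proj blk i (F xc + lam (Suc t) *\<^sub>R (F xc - F xp));
          u = prox (Xs i) (\<omega> i) (\<omega>' i) (gam (Suc t)) g (blk_proj blk i xc)
      in (xc, xc - blk_proj blk i xc + u))"

text \<open>x_{k+1} of SBOE run with index sequence seq.\<close>
definition sboe_next where
  "sboe_next blk Xs \<omega> \<omega>' F gam lam x1 seq k = snd (sboe_st blk Xs \<omega> \<omega>' F gam lam x1 seq k)"

end

theory Submission
  imports Defs
begin

lemma bp_nth: "blk_proj blk i x $ j = (if blk j = i then x $ j else 0)"
  by (simp add: blk_proj_def)

lemma bp_add: "blk_proj blk i (x + y) = blk_proj blk i x + blk_proj blk i y"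
  by (simp add: vec_eq_iff bp_nth)
lemma bp_diff: "blk_proj blk i (x - y) = blk_proj blk i x - blk_proj blk i y"
  by (simp add: vec_eq_iff bp_nth)
lemma bp_minus: "blk_proj blk i (- x) = - blk_proj blk i x"
  by (simp add: vec_eq_iff bp_nth)
lemma bp_scale: "blk_proj blk i (c *\<^sub>R x) = c *\<^sub>R blk_proj blk i x"
  by (simp add: vec_eq_iff bp_nth)
lemma bp_zero: "blk_proj blk i 0 = 0"
  by (simp add: vec_eq_iff bp_nth)
lemma bp_in: "blk_proj blk i x \<in> blk_space blk i"
  by (simp add: blk_space_def bp_nth)
lemma bp_id: "x \<in> blk_space blk i \<Longrightarrow> blk_proj blk i x = x"
  by (auto simp: vec_eq_iff bp_nth blk_space_def)
lemma bp_other: "x \<in> blk_space blk i \<Longrightarrow> j \<noteq> i \<Longrightarrow> blk_proj blk j x = 0"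
  by (auto simp: vec_eq_iff bp_nth blk_space_def)
lemma bp_bp: "blk_proj blk i (blk_proj blk i x) = blk_proj blk i x"
  by (simp add: vec_eq_iff bp_nth)
lemma bs_zero: "0 \<in> blk_space blk i" by (simp add: blk_space_def)
lemma bs_add: "x \<in> blk_space blk i \<Longrightarrow> y \<in> blk_space blk i \<Longrightarrow> x + y \<in> blk_space blk i"
  by (simp add: blk_space_def)
lemma bs_diff: "x \<in> blk_space blk i \<Longrightarrow> y \<in> blk_space blk i \<Longrightarrow> x - y \<in> blk_space blk i"
  by (simp add: blk_space_def)
lemma bs_scale: "x \<in> blk_space blk i \<Longrightarrow> c *\<^sub>R x \<in> blk_space blk i"
  by (simp add: blk_space_def)
lemma bs_minus: "x \<in> blk_space blk i \<Longrightarrow> - x \<in> blk_space blk i"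
  by (simp add: blk_space_def)

lemma inner_bp_left: "inner (blk_proj blk i x) y = inner (blk_proj blk i x) (blk_proj blk i y)"
  by (auto simp: inner_vec_def bp_nth intro!: sum.cong)
lemma inner_bp_right: "inner x (blk_proj blk i y) = inner (blk_proj blk i x) (blk_proj blk i y)"
  by (auto simp: inner_vec_def bp_nth intro!: sum.cong)

lemma sum_bp:
  assumes "\<forall>j. blk j < b"
  shows "(\<Sum>i<b. blk_proj blk i x) = x"
proof -
  have "(\<Sum>i<b. blk_proj blk i x) $ j = x $ j" for j
  proof -
    have "(\<Sum>i<b. blk_proj blk i x) $ j = (\<Sum>i<b. if blk j = i then x $ j else 0)"
      by (simp add: sum_component bp_nth)
    also have "\<dots> = x $ j" using assms by (simp add: sum.delta)
    finally show ?thesis .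
  qed
  then show ?thesis by (simp add: vec_eq_iff)
qed

lemma inner_blocks:
  assumes "\<forall>j. blk j < b"
  shows "inner x y = (\<Sum>i<b. inner (blk_proj blk i x) (blk_proj blk i y))"
proof -
  have "inner x y = inner (\<Sum>i<b. blk_proj blk i x) y" using sum_bp[OF assms] by simp
  also have "\<dots> = (\<Sum>i<b. inner (blk_proj blk i x) y)" by (simp add: inner_sum_left)
  also have "\<dots> = (\<Sum>i<b. inner (blk_proj blk i x) (blk_proj blk i y))"
    using inner_bp_left by metis
  finally show ?thesis .
qed

lemma closed_bs: "closed (blk_space blk i)"
proof -
  have "blk_space blk i = (\<Inter>j\<in>{j. blk j \<noteq> i}. {x. x $ j = 0})"
    by (auto simp: blk_space_def)
  moreover have "closed {x::real^'a. x $ j = 0}" for j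
    by (intro closed_Collect_eq continuous_intros)
  ultimately show ?thesis by auto
qed


context
  fixes blk :: "'n::finite \<Rightarrow> nat" and i :: nat and N :: "real^'n \<Rightarrow> real"
  assumes nN: "is_norm_on (blk_space blk i) N"
begin

lemma N_nonneg: "x \<in> blk_space blk i \<Longrightarrow> N x \<ge> 0"
  using nN by (auto simp: is_norm_on_def)
lemma N_zero_iff: "x \<in> blk_space blk i \<Longrightarrow> N x = 0 \<longleftrightarrow> x = 0"
  using nN by (auto simp: is_norm_on_def)
lemma N_zero: "N 0 = 0"
  using N_zero_iff[OF bs_zero] by simp
lemma N_scale: "x \<in> blk_space blk i \<Longrightarrow> N (c *\<^sub>R x) = \<bar>c\<bar> * N x"
  using nN by (auto simp: is_norm_on_def)
lemma N_tri: "x \<in> blk_space blk i \<Longrightarrow> y \<in> blk_space blk i \<Longrightarrow> N (x + y) \<le> N x + N y"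
  using nN by (auto simp: is_norm_on_def)
lemma N_minus: "x \<in> blk_space blk i \<Longrightarrow> N (- x) = N x"
  using N_scale[of x "-1"] by simp
lemma N_commute: "x \<in> blk_space blk i \<Longrightarrow> y \<in> blk_space blk i \<Longrightarrow> N (x - y) = N (y - x)"
  using N_minus[of "y - x"] bs_diff[of y blk i x] by simp

lemma N_sum_axis:
  assumes "finite A" "\<forall>j\<in>A. blk j = i"
  shows "N (\<Sum>j\<in>A. (w $ j) *\<^sub>R axis j 1) \<le> (\<Sum>j\<in>A. \<bar>w $ j\<bar> * N (axis j 1))
         \<and> (\<Sum>j\<in>A. (w $ j) *\<^sub>R axis j 1) \<in> blk_space blk i"
  using assms
proof (induction A rule: finite_induct)
  case empty
  then show ?case by (simp add: N_zero bs_zero)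
next
  case (insert a A)
  have ax: "axis a 1 \<in> blk_space blk i" using insert.prems
    by (auto simp: blk_space_def axis_def)
  have ih: "N (\<Sum>j\<in>A. (w $ j) *\<^sub>R axis j 1) \<le> (\<Sum>j\<in>A. \<bar>w $ j\<bar> * N (axis j 1))"
    "(\<Sum>j\<in>A. (w $ j) *\<^sub>R axis j 1) \<in> blk_space blk i" using insert by auto
  have s1: "(w $ a) *\<^sub>R axis a 1 \<in> blk_space blk i" by (rule bs_scale[OF ax])
  have "N (\<Sum>j\<in>insert a A. (w $ j) *\<^sub>R axis j 1)
        = N ((w $ a) *\<^sub>R axis a 1 + (\<Sum>j\<in>A. (w $ j) *\<^sub>R axis j 1))"
    using insert.hyps by simp
  also have "\<dots> \<le> N ((w $ a) *\<^sub>R axis a 1) + N (\<Sum>j\<in>A. (w $ j) *\<^sub>R axis j 1)"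
    by (rule N_tri[OF s1 ih(2)])
  also have "\<dots> \<le> \<bar>w $ a\<bar> * N (axis a 1) + (\<Sum>j\<in>A. \<bar>w $ j\<bar> * N (axis j 1))"
    using ih(1) N_scale[OF ax] by simp
  finally show ?case using insert.hyps bs_add[OF s1 ih(2)] by simp
qed

lemma N_upper: "\<exists>M\<ge>0. \<forall>w\<in>blk_space blk i. N w \<le> M * norm w"
proof -
  define J where "J = {j. blk j = i}"
  define M where "M = (\<Sum>j\<in>J. N (axis j 1))"
  have axJ: "j \<in> J \<Longrightarrow> axis j 1 \<in> blk_space blk i" for j
    by (auto simp: blk_space_def axis_def J_def)
  have M0: "M \<ge> 0" unfolding M_def using axJ N_nonneg by (intro sum_nonneg) auto
  have "N w \<le> M * norm w" if w: "w \<in> blk_space blk i" for w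
  proof -
    have weq: "w = (\<Sum>j\<in>J. (w $ j) *\<^sub>R axis j 1)"
    proof -
      have "(\<Sum>j\<in>J. (w $ j) *\<^sub>R axis j (1::real)) $ k = w $ k" for k
      proof -
        have "(\<Sum>j\<in>J. (w $ j) *\<^sub>R axis j (1::real)) $ k = (\<Sum>j\<in>J. if k = j then w $ j else 0)"
          unfolding sum_component by (intro sum.cong refl) (simp add: axis_def)
        also have "\<dots> = (if k \<in> J then w $ k else 0)" using sum.delta'[of J k "\<lambda>j. w $ j"] by simp
        also have "\<dots> = w $ k" using w by (simp add: J_def blk_space_def)
        finally show ?thesis .
      qed
      then show ?thesis by (simp add: vec_eq_iff)
    qed
    have h: "N (\<Sum>j\<in>J. (w $ j) *\<^sub>R axis j 1) \<le> (\<Sum>j\<in>J. \<bar>w $ j\<bar> * N (axis j 1))"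
    proof -
      have "finite J" by simp
      moreover have "\<forall>j\<in>J. blk j = i" by (simp add: J_def)
      ultimately show ?thesis using N_sum_axis[of J w] by blast
    qed
    have h2: "N w = N (\<Sum>j\<in>J. (w $ j) *\<^sub>R axis j 1)" by (rule arg_cong[OF weq])
    have "N w \<le> (\<Sum>j\<in>J. \<bar>w $ j\<bar> * N (axis j 1))"
      using h h2 by linarith
    also have "\<dots> \<le> (\<Sum>j\<in>J. norm w * N (axis j 1))"
      using axJ N_nonneg component_le_norm_cart[of w]
      by (intro sum_mono mult_right_mono) auto
    also have "\<dots> = M * norm w" by (simp add: M_def sum_distrib_left mult.commute)
    finally show ?thesis .
  qed
  then show ?thesis using M0 by blast
qed

lemma N_cont: "continuous_on (blk_space blk i) N"
proof -
  obtain M where M: "M \<ge> 0" "\<forall>w\<in>blk_space blk i. N w \<le> M * norm w" using N_upper by blast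
  have lip: "\<bar>N x - N y\<bar> \<le> M * dist x y" if "x \<in> blk_space blk i" "y \<in> blk_space blk i" for x y
  proof -
    have xy: "x - y \<in> blk_space blk i" "y - x \<in> blk_space blk i" using that bs_diff by auto
    have "N x \<le> N (x - y) + N y" using N_tri[OF xy(1) that(2)] by simp
    moreover have "N y \<le> N (y - x) + N x" using N_tri[OF xy(2) that(1)] by simp
    moreover have "N (x - y) \<le> M * dist x y" using M xy by (simp add: dist_norm)
    moreover have "N (y - x) = N (x - y)" using N_commute that by simp
    ultimately show ?thesis by linarith
  qed
  show ?thesis
    unfolding continuous_on_iff
  proof (intro ballI allI impI)
    fix x e assume x: "x \<in> blk_space blk i" and e: "(0::real) < e"
    show "\<exists>d>0. \<forall>x'\<in>blk_space blk i. dist x' x < d \<longrightarrow> dist (N x') (N x) < e"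
    proof (intro exI[of _ "e / (M + 1)"] conjI ballI impI)
      show "e / (M + 1) > 0" using e M by simp
      fix y assume y: "y \<in> blk_space blk i" and d: "dist y x < e / (M + 1)"
      have "dist (N y) (N x) \<le> M * dist y x" using lip[OF y x] by (simp add: dist_real_def)
      also have "\<dots> \<le> (M + 1) * dist y x" by (simp add: distrib_right)
      also have "\<dots> < e" using d M by (simp add: field_simps)
      finally show "dist (N y) (N x) < e" .
    qed
  qed
qed

lemma N_lower: "\<exists>c>0. \<forall>w\<in>blk_space blk i. c * norm w \<le> N w"
proof (cases "blk_space blk i \<inter> sphere 0 1 = {}")
  case True
  have "w = 0" if "w \<in> blk_space blk i" for w
  proof (rule ccontr)
    assume "w \<noteq> 0"
    then have "(1 / norm w) *\<^sub>R w \<in> blk_space blk i \<inter> sphere 0 1"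
      using that bs_scale by (auto simp: norm_sgn)
    with True show False by blast
  qed
  then have "\<forall>w\<in>blk_space blk i. 1 * norm w \<le> N w" by (metis N_zero mult_1 norm_zero order_refl)
  then show ?thesis by (intro exI[of _ 1]) auto
next
  case False
  have K: "compact (blk_space blk i \<inter> sphere 0 1)"
    using closed_bs compact_sphere by (intro closed_Int_compact) auto
  obtain w0 where w0: "w0 \<in> blk_space blk i \<inter> sphere 0 1"
    "\<forall>y\<in>blk_space blk i \<inter> sphere 0 1. N w0 \<le> N y"
    using continuous_attains_inf[OF K False continuous_on_subset[OF N_cont]] by blast
  have w0S: "w0 \<in> blk_space blk i" and w0n: "w0 \<noteq> 0" using w0(1) by auto
  have c0: "N w0 > 0" using N_nonneg[OF w0S] N_zero_iff[OF w0S] w0n by linarith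
  have "N w0 * norm w \<le> N w" if w: "w \<in> blk_space blk i" for w
  proof (cases "w = 0")
    case True then show ?thesis by (simp add: N_zero)
  next
    case False
    have u: "(1 / norm w) *\<^sub>R w \<in> blk_space blk i \<inter> sphere 0 1"
      using False w bs_scale by auto
    have "N w0 \<le> N ((1 / norm w) *\<^sub>R w)" using w0(2) u by blast
    also have "\<dots> = N w / norm w" using N_scale[OF w] by simp
    finally show ?thesis using False by (simp add: field_simps)
  qed
  then show ?thesis using c0 by blast
qed

lemma dual_ineq:
  assumes u: "u \<in> blk_space blk i"
  shows "inner y u \<le> dual_norm (blk_space blk i) N y * N u"
proof -
  obtain c where c: "c > 0" "\<forall>w\<in>blk_space blk i. c * norm w \<le> N w" using N_lower by blast
  let ?A = "{inner y u | u. u \<in> blk_space blk i \<and> N u \<le> 1}"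
  have bdd: "bdd_above ?A"
  proof (rule bdd_aboveI)
    fix a assume "a \<in> ?A"
    then obtain v where v: "a = inner y v" "v \<in> blk_space blk i" "N v \<le> 1" by blast
    have "c * norm v \<le> N v" using c(2) v(2) by blast
    then have "c * norm v \<le> 1" using v(3) by linarith
    then have "norm v \<le> 1 / c" using c by (simp add: field_simps)
    have "a \<le> norm y * norm v" using v(1) norm_cauchy_schwarz[of y v] by simp
    also have "\<dots> \<le> norm y * (1 / c)" using \<open>norm v \<le> 1 / c\<close> by (rule mult_left_mono) simp
    finally show "a \<le> norm y * (1 / c)" .
  qed
  show ?thesis
  proof (cases "u = 0")
    case True
    then show ?thesis by (simp add: N_zero)
  next
    case False
    have Np: "N u > 0" using N_nonneg[OF u] N_zero_iff[OF u] False by linarith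
    have m1: "(1 / N u) *\<^sub>R u \<in> blk_space blk i" using bs_scale[OF u] .
    have m2: "N ((1 / N u) *\<^sub>R u) \<le> 1" using N_scale[OF u] Np by simp
    have mem: "inner y ((1 / N u) *\<^sub>R u) \<in> ?A"
      by (rule CollectI, rule exI[of _ "(1 / N u) *\<^sub>R u"], intro conjI refl m1 m2)
    have le: "inner y ((1 / N u) *\<^sub>R u) \<le> dual_norm (blk_space blk i) N y"
      unfolding dual_norm_def by (rule cSup_upper[OF mem bdd])
    have eq: "inner y ((1 / N u) *\<^sub>R u) = inner y u / N u" by simp
    have "inner y u / N u \<le> dual_norm (blk_space blk i) N y" using le eq by simp
    then show ?thesis using Np by (simp add: pos_divide_le_eq)
  qed
qed

end

lemma fo_min:
  fixes f :: "'a::real_normed_vector \<Rightarrow> real"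
  assumes S: "convex S" and u: "u \<in> S" and v: "v \<in> S"
    and d: "(f has_derivative f') (at u within S)" and m: "\<forall>w\<in>S. f u \<le> f w"
  shows "f' (v - u) \<ge> 0"
proof (rule ccontr)
  assume neg: "\<not> f' (v - u) \<ge> 0"
  define p where "p = (\<lambda>t::real. u + t *\<^sub>R (v - u))"
  have pS: "p t \<in> S" if "t \<in> {0..1}" for t
  proof -
    have "p t = (1 - t) *\<^sub>R u + t *\<^sub>R v" by (simp add: p_def algebra_simps)
    then show ?thesis using S u v that by (simp add: convex_alt)
  qed
  have p0: "p 0 = u" by (simp add: p_def)
  have dp: "(p has_derivative (\<lambda>t. t *\<^sub>R (v - u))) (at 0 within {0..1})"
    unfolding p_def by (intro derivative_eq_intros) auto
  have d2: "(f has_derivative f') (at (p 0) within p ` {0..1})"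
  proof -
    have "p ` {0..1} \<subseteq> S" using pS by auto
    then show ?thesis using has_derivative_subset[OF d] p0 by simp
  qed
  have dfp: "((f \<circ> p) has_derivative (f' \<circ> (\<lambda>t. t *\<^sub>R (v - u)))) (at 0 within {0..1})"
    by (rule diff_chain_within[OF dp d2])
  interpret bl: bounded_linear f' using d by (rule has_derivative_bounded_linear)
  have eqf: "(f' \<circ> (\<lambda>t. t *\<^sub>R (v - u))) = (\<lambda>t. (- (- f' (v - u))) * t)"
    by (rule ext) (simp add: bl.scaleR)
  have dd: "((\<lambda>t. f (p t)) has_real_derivative (- (- f' (v - u)))) (at 0 within {0..1})"
    using dfp unfolding has_field_derivative_def eqf by (simp add: o_def mult.commute)
  have d3: "((\<lambda>t. - f (p t)) has_real_derivative (- (- (- f' (v - u))))) (at 0 within {0..1})"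
    by (rule DERIV_minus[OF dd])
  have pos: "0 < - (- (- f' (v - u)))" using neg by linarith
  obtain e where e: "e > 0" and e2: "\<forall>h>0. 0 + h \<in> {0..1} \<longrightarrow> h < e \<longrightarrow> - f (p 0) < - f (p (0 + h))"
    using has_real_derivative_pos_inc_right[OF d3 pos] by blast
  define h where "h = min (e / 2) 1"
  have h: "h > 0" "h \<in> {0..1}" "h < e" using e by (auto simp: h_def)
  have h2: "0 + h \<in> {0..1}" using h(2) by simp
  have "- f (p 0) < - f (p (0 + h))" using e2[rule_format, OF h(1) h2 h(3)] .
  then have "f (p h) < f u" using p0 by simp
  moreover have "f u \<le> f (p h)" using m pS[OF h(2)] by blast
  ultimately show False by linarith
qed

context
  fixes blk :: "'n::finite \<Rightarrow> nat" and i :: nat and N :: "real^'n \<Rightarrow> real"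
    and Xi :: "(real^'n) set" and \<omega> :: "real^'n \<Rightarrow> real" and \<omega>' :: "real^'n \<Rightarrow> real^'n"
  assumes nN: "is_norm_on (blk_space blk i) N"
    and Xi: "closed Xi" "convex Xi" "Xi \<subseteq> blk_space blk i"
    and der: "\<forall>u\<in>Xi. (\<omega> has_derivative (\<lambda>h. inner (\<omega>' u) h)) (at u within Xi)"
    and sc: "strongly_convex1 Xi N \<omega> \<omega>'"
begin

lemma breg_lb: "u \<in> Xi \<Longrightarrow> v \<in> Xi \<Longrightarrow> 1/2 * (N (v - u))\<^sup>2 \<le> bregman \<omega> \<omega>' u v"
proof -
  assume a: "u \<in> Xi" "v \<in> Xi"
  have "\<omega> u + inner (\<omega>' u) (v - u) + 1/2 * (N (v - u))\<^sup>2 \<le> \<omega> v"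
    using sc a unfolding strongly_convex1_def by blast
  then show ?thesis unfolding bregman_def by linarith
qed

lemma omega_cont: "continuous_on Xi \<omega>"
  unfolding continuous_on_eq_continuous_within
  using der has_derivative_continuous by blast

lemma prox_ex:
  assumes xi: "xi \<in> Xi"
  shows "\<exists>u. u \<in> Xi \<and> (\<forall>v\<in>Xi. gam * inner g u + bregman \<omega> \<omega>' xi u \<le> gam * inner g v + bregman \<omega> \<omega>' xi v)"
proof -
  define f where "f = (\<lambda>v. gam * inner g v + bregman \<omega> \<omega>' xi v)"
  have fcont: "continuous_on Xi f"
    unfolding f_def bregman_def by (intro continuous_intros omega_cont)
  define K where "K = Xi \<inter> f -` {..f xi}"
  have Kc: "closed K" unfolding K_def by (rule continuous_closed_preimage[OF fcont Xi(1)]) simp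
  obtain c where c: "c > 0" "\<forall>w\<in>blk_space blk i. c * norm w \<le> N w"
    using N_lower[OF nN] by blast
  have fxi: "f xi = gam * inner g xi" by (simp add: f_def bregman_def)
  have bnd: "norm (v - xi) \<le> 2 * \<bar>gam\<bar> * norm g / c\<^sup>2" if v: "v \<in> K" for v
  proof -
    have vX: "v \<in> Xi" and fv: "f v \<le> f xi" using v by (auto simp: K_def)
    have dS: "v - xi \<in> blk_space blk i" using Xi(3) vX xi bs_diff by blast
    have cn: "c * norm (v - xi) \<le> N (v - xi)" using c(2) dS by blast
    have "(c * norm (v - xi))\<^sup>2 \<le> (N (v - xi))\<^sup>2"
      using cn c(1) by (intro power_mono) auto
    moreover have "1/2 * (N (v - xi))\<^sup>2 \<le> bregman \<omega> \<omega>' xi v" by (rule breg_lb[OF xi vX])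
    moreover have "gam * inner g v - gam * inner g xi \<ge> - (\<bar>gam\<bar> * norm g * norm (v - xi))"
    proof -
      have "gam * inner g v - gam * inner g xi = gam * inner g (v - xi)" by (simp add: inner_diff_right algebra_simps)
      moreover have "\<bar>gam * inner g (v - xi)\<bar> \<le> \<bar>gam\<bar> * (norm g * norm (v - xi))"
        unfolding abs_mult by (intro mult_left_mono Cauchy_Schwarz_ineq2) auto
      ultimately show ?thesis by (simp add: abs_le_iff)
    qed
    ultimately have key: "c\<^sup>2 / 2 * (norm (v - xi))\<^sup>2 \<le> \<bar>gam\<bar> * norm g * norm (v - xi)"
      using fv fxi unfolding f_def by (simp add: power_mult_distrib)
    show ?thesis
    proof (cases "norm (v - xi) = 0")
      case True then show ?thesis using c(1) by simp
    next
      case False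
      then have r: "norm (v - xi) > 0" by simp
      have "(c\<^sup>2 / 2 * norm (v - xi)) * norm (v - xi) \<le> (\<bar>gam\<bar> * norm g) * norm (v - xi)"
        using key by (simp add: power2_eq_square mult.assoc)
      then have "c\<^sup>2 / 2 * norm (v - xi) \<le> \<bar>gam\<bar> * norm g"
        using r by (rule mult_right_le_imp_le)
      then show ?thesis using c(1) by (simp add: field_simps)
    qed
  qed
  have Kb: "bounded K" unfolding bounded_iff
  proof (intro exI[of _ "norm xi + 2 * \<bar>gam\<bar> * norm g / c\<^sup>2"] ballI)
    fix v assume "v \<in> K"
    have "norm v \<le> norm xi + norm (v - xi)" by (rule norm_triangle_sub)
    then show "norm v \<le> norm xi + 2 * \<bar>gam\<bar> * norm g / c\<^sup>2" using bnd[OF \<open>v \<in> K\<close>] by linarith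
  qed
  have Kcomp: "compact K" using Kc Kb by (simp add: compact_eq_bounded_closed)
  have KS: "K \<subseteq> Xi" by (auto simp: K_def)
  have Kne: "K \<noteq> {}" using xi by (auto simp: K_def)
  obtain u where u: "u \<in> K" "\<forall>y\<in>K. f u \<le> f y"
    using continuous_attains_inf[OF Kcomp Kne continuous_on_subset[OF fcont KS]] by blast
  have "\<forall>v\<in>Xi. f u \<le> f v"
  proof
    fix v assume v: "v \<in> Xi"
    show "f u \<le> f v"
    proof (cases "v \<in> K")
      case True then show ?thesis using u by blast
    next
      case False
      then have "f v > f xi" using v by (auto simp: K_def)
      moreover have "f u \<le> f xi" using u(2) xi by (auto simp: K_def)
      ultimately show ?thesis by linarith
    qed
  qed
  then show ?thesis using u KS unfolding f_def by blast
qed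

lemma three_point:
  fixes gam :: real and g :: "real^'n"
  assumes xi: "xi \<in> Xi" and v: "v \<in> Xi"
  defines "u \<equiv> prox Xi \<omega> \<omega>' gam g xi"
  shows "u \<in> Xi \<and> gam * inner g (u - v) + bregman \<omega> \<omega>' xi u \<le> bregman \<omega> \<omega>' xi v - bregman \<omega> \<omega>' u v"
proof -
  have uP: "u \<in> Xi \<and> (\<forall>v\<in>Xi. gam * inner g u + bregman \<omega> \<omega>' xi u \<le> gam * inner g v + bregman \<omega> \<omega>' xi v)"
    unfolding u_def prox_def by (rule someI_ex[OF prox_ex[OF xi]])
  then have uX: "u \<in> Xi" by blast
  define f where "f = (\<lambda>w. gam * inner g w + (\<omega> w - \<omega> xi - inner (\<omega>' xi) (w - xi)))"
  have fd: "(f has_derivative (\<lambda>h. gam * inner g h + (inner (\<omega>' u) h - 0 - inner (\<omega>' xi) h))) (at u within Xi)"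
    unfolding f_def using der uX by (auto intro!: derivative_eq_intros)
  have m: "\<forall>w\<in>Xi. f u \<le> f w" using uP unfolding f_def bregman_def by blast
  have fo: "0 \<le> gam * inner g (v - u) + (inner (\<omega>' u) (v - u) - 0 - inner (\<omega>' xi) (v - u))"
    using fo_min[OF Xi(2) uX v fd m] by simp
  have id: "inner (\<omega>' u) (v - u) - inner (\<omega>' xi) (v - u)
      = bregman \<omega> \<omega>' xi v - bregman \<omega> \<omega>' u v - bregman \<omega> \<omega>' xi u"
    by (simp add: bregman_def inner_diff_right algebra_simps)
  have "gam * inner g (u - v) = - (gam * inner g (v - u))" by (simp add: inner_diff_right algebra_simps)
  then show ?thesis using fo id uX by linarith
qed

end

lemma bp_cross: "j \<noteq> i \<Longrightarrow> blk_proj blk j (blk_proj blk i x) = 0"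
  by (rule bp_other[OF bp_in])

locale sboe =
  fixes blk :: "'n::finite \<Rightarrow> nat" and b :: nat
    and Xs :: "nat \<Rightarrow> (real^'n) set" and N :: "nat \<Rightarrow> real^'n \<Rightarrow> real"
    and F :: "real^'n \<Rightarrow> real^'n" and L :: real
    and \<omega> :: "nat \<Rightarrow> real^'n \<Rightarrow> real" and \<omega>' :: "nat \<Rightarrow> real^'n \<Rightarrow> real^'n"
    and xstar :: "real^'n" and \<mu> \<gamma> lam :: real
  assumes b: "b \<ge> 1" and blk: "\<forall>j. blk j < b"
    and Xs: "\<forall>i<b. Xs i \<noteq> {} \<and> closed (Xs i) \<and> convex (Xs i) \<and> Xs i \<subseteq> blk_space blk i"
    and norms: "\<forall>i<b. is_norm_on (blk_space blk i) (N i)"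
    and L: "L > 0"
    and Lip: "\<forall>i<b. \<forall>x\<in>prod_set blk b Xs. \<forall>y\<in>prod_set blk b Xs.
               dual_norm (blk_space blk i) (N i) (blk_proj blk i (F x) - blk_proj blk i (F y))
                 \<le> L * blk_norm b blk N (x - y)"
    and deriv: "\<forall>i<b. \<forall>u\<in>Xs i. (\<omega> i has_derivative (\<lambda>h. inner (\<omega>' i u) h)) (at u within Xs i)"
    and sc: "\<forall>i<b. strongly_convex1 (Xs i) (N i) (\<omega> i) (\<omega>' i)"
    and xstar: "xstar \<in> prod_set blk b Xs"
    and mu: "\<mu> > 0"
    and growth: "\<forall>x\<in>prod_set blk b Xs. inner (F x) (x - xstar) \<ge> 2 * \<mu> * blk_V b blk \<omega> \<omega>' x xstar"
    and gamma: "\<gamma> = 1 / (2 * L * real b)"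
    and lambda: "lam = (real b + 2 * (real b - 1) * \<mu> * \<gamma>) / (1 + 2 * \<mu> * \<gamma>)"
begin

abbreviation "X \<equiv> prod_set blk b Xs"
abbreviation "P \<equiv> blk_proj blk"
abbreviation "V x \<equiv> blk_V b blk \<omega> \<omega>' x xstar"
abbreviation "Phi x \<equiv> inner (F x) (x - xstar)"
abbreviation "nrm x \<equiv> blk_norm b blk N x"
abbreviation "B i \<equiv> bregman (\<omega> i) (\<omega>' i)"

definition "cc = (real b - 1) / real b"
definition "rr = (1 + 2 * \<mu> * \<gamma>) / (1 + 2 * \<mu> * \<gamma> * cc)"

lemma Xs_i: "i < b \<Longrightarrow> closed (Xs i)" "i < b \<Longrightarrow> convex (Xs i)" "i < b \<Longrightarrow> Xs i \<subseteq> blk_space blk i"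
  using Xs by auto

lemma inX: "x \<in> X \<Longrightarrow> i < b \<Longrightarrow> P i x \<in> Xs i"
  by (simp add: prod_set_def)

lemma nN: "i < b \<Longrightarrow> is_norm_on (blk_space blk i) (N i)" using norms by auto

lemma three_point_i:
  assumes "i < b" "xi \<in> Xs i" "v \<in> Xs i"
  shows "prox (Xs i) (\<omega> i) (\<omega>' i) gam g xi \<in> Xs i \<and>
    gam * inner g (prox (Xs i) (\<omega> i) (\<omega>' i) gam g xi - v) + B i xi (prox (Xs i) (\<omega> i) (\<omega>' i) gam g xi)
      \<le> B i xi v - B i (prox (Xs i) (\<omega> i) (\<omega>' i) gam g xi) v"
  using three_point[OF nN[OF assms(1)] Xs_i[OF assms(1)] _ _ assms(2,3)] deriv sc assms(1) by blast

lemma breg_lb_i: "i < b \<Longrightarrow> u \<in> Xs i \<Longrightarrow> v \<in> Xs i \<Longrightarrow> 1/2 * (N i (v - u))\<^sup>2 \<le> B i u v"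
  using breg_lb[OF nN Xs_i] deriv sc by blast

lemma gL: "\<gamma> * L = 1 / (2 * real b)" using L b by (simp add: gamma)
lemma g_pos: "\<gamma> > 0" using L b by (simp add: gamma)
lemma cc_ge: "0 \<le> cc" "cc \<le> 1" using b by (auto simp: cc_def)
lemma rr_pos: "rr \<ge> 1"
proof -
  have "2 * \<mu> * \<gamma> * cc \<le> 2 * \<mu> * \<gamma>" using cc_ge mu g_pos by (simp add: mult_left_le)
  moreover have "0 \<le> 2 * \<mu> * \<gamma> * cc" using cc_ge mu g_pos by simp
  ultimately show ?thesis unfolding rr_def by (simp add: field_simps)
qed
lemma rr_eq: "rr * (1 + 2 * \<mu> * \<gamma> * cc) = 1 + 2 * \<mu> * \<gamma>"
proof -
  have "0 < 1 + 2 * \<mu> * \<gamma> * cc" using cc_ge mu g_pos by (simp add: add_pos_nonneg)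
  then show ?thesis unfolding rr_def by simp
qed
lemma lam_eq: "lam = real b / rr"
proof -
  have p1: "0 < 1 + 2 * \<mu> * \<gamma> * cc" using cc_ge mu g_pos by (simp add: add_pos_nonneg)
  have p2: "0 < 1 + 2 * \<mu> * \<gamma>" using mu g_pos by (simp add: add_pos_pos)
  have "real b * (1 + 2 * \<mu> * \<gamma> * cc) = real b + 2 * (real b - 1) * \<mu> * \<gamma>"
    using b by (simp add: cc_def field_simps)
  then show ?thesis unfolding lambda rr_def using p1 p2 by (simp add: field_simps)
qed

lemma V_def': "V x = (\<Sum>j<b. B j (P j x) (P j xstar))"
  by (simp add: blk_V_def)

lemma V_lb: assumes "x \<in> X" shows "(\<Sum>j<b. (N j (P j (x - xstar)))\<^sup>2) \<le> 2 * V x"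
proof -
  have "(N j (P j (x - xstar)))\<^sup>2 \<le> 2 * B j (P j x) (P j xstar)" if j: "j < b" for j
  proof -
    have "N j (P j (x - xstar)) = N j (P j xstar - P j x)"
      using N_commute[OF nN[OF j] bp_in bp_in] by (simp add: bp_diff)
    then show ?thesis using breg_lb_i[OF j inX[OF assms j] inX[OF xstar j]] by simp
  qed
  then have "(\<Sum>j<b. (N j (P j (x - xstar)))\<^sup>2) \<le> (\<Sum>j<b. 2 * B j (P j x) (P j xstar))"
    by (intro sum_mono) auto
  then show ?thesis by (simp add: V_def' sum_distrib_left)
qed

lemma V_nonneg: "x \<in> X \<Longrightarrow> V x \<ge> 0"
proof -
  assume "x \<in> X"
  from V_lb[OF this] have "0 \<le> (\<Sum>j<b. (N j (P j (x - xstar)))\<^sup>2)" by (intro sum_nonneg) simp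
  then show ?thesis using V_lb[OF \<open>x \<in> X\<close>] by linarith
qed

lemma Phi_nonneg: "x \<in> X \<Longrightarrow> Phi x \<ge> 2 * \<mu> * V x" "x \<in> X \<Longrightarrow> Phi x \<ge> 0"
proof -
  assume x: "x \<in> X"
  show "Phi x \<ge> 2 * \<mu> * V x" using growth x by blast
  moreover have "2 * \<mu> * V x \<ge> 0" using V_nonneg[OF x] mu by simp
  ultimately show "Phi x \<ge> 0" by linarith
qed

lemma nrm_single:
  assumes i: "i < b" and d: "d \<in> blk_space blk i"
  shows "nrm d = N i d"
proof -
  have "(\<Sum>j<b. (N j (P j d))\<^sup>2) = (\<Sum>j<b. if j = i then (N i d)\<^sup>2 else 0)"
  proof (intro sum.cong refl)
    fix j assume j: "j \<in> {..<b}"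
    show "(N j (P j d))\<^sup>2 = (if j = i then (N i d)\<^sup>2 else 0)"
    proof (cases "j = i")
      case True then show ?thesis using bp_id[OF d] by simp
    next
      case False then show ?thesis using bp_other[OF d False] N_zero[OF nN] j by simp
    qed
  qed
  also have "\<dots> = (N i d)\<^sup>2" using i by simp
  finally show ?thesis using N_nonneg[OF nN[OF i] d] by (simp add: blk_norm_def)
qed

lemma nrm_nonneg: "nrm x \<ge> 0" unfolding blk_norm_def by (intro real_sqrt_ge_zero sum_nonneg) simp

lemma nrm_commute: "nrm (x - y) = nrm (y - x)"
proof -
  have "N j (P j (x - y)) = N j (P j (y - x))" if "j < b" for j
    using N_commute[OF nN[OF that] bp_in bp_in] by (simp add: bp_diff)
  then show ?thesis unfolding blk_norm_def by (metis (no_types, lifting) lessThan_iff sum.cong)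
qed

lemma Lip_use:
  assumes x: "x \<in> X" and y: "y \<in> X" and i: "i < b" and w: "w \<in> blk_space blk i"
  shows "\<bar>inner (F x - F y) w\<bar> \<le> L * nrm (x - y) * N i w"
proof -
  let ?D = "P i (F x) - P i (F y)"
  have e: "inner (F x - F y) w = inner ?D w"
    using inner_bp_right[of "F x - F y" blk i w] inner_bp_left[of blk i "F x - F y" w] bp_id[OF w]
    by (simp add: bp_diff)
  have dl: "dual_norm (blk_space blk i) (N i) ?D \<le> L * nrm (x - y)" using Lip i x y by blast
  have Nw: "N i w \<ge> 0" using N_nonneg[OF nN[OF i] w] .
  have a1: "inner ?D w \<le> dual_norm (blk_space blk i) (N i) ?D * N i w"
    by (rule dual_ineq[OF nN[OF i] w])
  have a2: "inner ?D (- w) \<le> dual_norm (blk_space blk i) (N i) ?D * N i (- w)"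
    by (rule dual_ineq[OF nN[OF i] bs_minus[OF w]])
  have Nm: "N i (- w) = N i w" by (rule N_minus[OF nN[OF i] w])
  have "dual_norm (blk_space blk i) (N i) ?D * N i w \<le> L * nrm (x - y) * N i w"
    using dl Nw by (rule mult_right_mono)
  then show ?thesis using a1 a2 Nm e by (simp add: abs_le_iff)
qed

end

context sboe begin

definition step :: "nat \<Rightarrow> ((real^'n) \<times> (real^'n)) \<Rightarrow> ((real^'n) \<times> (real^'n))" where
  "step i s = (snd s, snd s - P i (snd s)
      + prox (Xs i) (\<omega> i) (\<omega>' i) \<gamma> (P i (F (snd s) + lam *\<^sub>R (F (snd s) - F (fst s)))) (P i (snd s)))"

definition psi :: "((real^'n) \<times> (real^'n)) \<Rightarrow> real" where
  "psi s = V (snd s) + \<gamma> * cc * Phi (snd s)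
     - (1 / rr) * (\<gamma> * inner (F (snd s) - F (fst s)) (snd s - xstar) - (nrm (snd s - fst s))\<^sup>2 / 4)"

lemma inner_split_bound:
  assumes xp: "xp \<in> X" and xc: "xc \<in> X"
  shows "\<gamma> * inner (F xc - F xp) (xc - xstar) - (nrm (xc - xp))\<^sup>2 / 4 \<le> V xc / (2 * real b)"
proof -
  define z where "z = xc - xstar"
  define a where "a = nrm (xc - xp)"
  define n where "n = (\<lambda>j. N j (P j z))"
  define S where "S = (\<Sum>j<b. n j)"
  have a0: "a \<ge> 0" unfolding a_def by (rule nrm_nonneg)
  have n0: "j < b \<Longrightarrow> n j \<ge> 0" for j unfolding n_def using N_nonneg[OF nN bp_in] by blast
  have S0: "S \<ge> 0" unfolding S_def using n0 by (intro sum_nonneg) auto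
  have "inner (F xc - F xp) z = (\<Sum>j<b. inner (P j (F xc - F xp)) (P j z))"
    by (rule inner_blocks[OF blk])
  also have "\<dots> \<le> (\<Sum>j<b. L * a * n j)"
  proof (intro sum_mono)
    fix j assume j: "j \<in> {..<b}"
    have "inner (P j (F xc - F xp)) (P j z) = inner (F xc - F xp) (P j z)"
      by (rule inner_bp_right[symmetric])
    also have "\<dots> \<le> L * a * n j"
      using Lip_use[OF xc xp _ bp_in, of j "z"] j unfolding a_def n_def by simp
    finally show "inner (P j (F xc - F xp)) (P j z) \<le> L * a * n j" .
  qed
  also have "\<dots> = L * a * S" by (simp add: S_def sum_distrib_left)
  finally have i1: "inner (F xc - F xp) z \<le> L * a * S" .
  have "\<gamma> * inner (F xc - F xp) z \<le> \<gamma> * (L * a * S)"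
    using i1 g_pos by (simp add: mult_left_mono)
  also have "\<dots> = (\<gamma> * L) * a * S" by (simp add: algebra_simps)
  also have "\<dots> = a * S / (2 * real b)" unfolding gL by simp
  finally have i2: "\<gamma> * inner (F xc - F xp) z \<le> a * S / (2 * real b)" .
  have bpos: "real b > 0" using b by simp
  have i3: "a * S / (2 * real b) \<le> a\<^sup>2 / 4 + S\<^sup>2 / (4 * (real b)\<^sup>2)"
  proof -
    have "0 \<le> (a / 2 - S / (2 * real b))\<^sup>2" by simp
    then show ?thesis using bpos by (simp add: power2_eq_square field_simps)
  qed
  have "S\<^sup>2 \<le> (\<Sum>j<b. (n j)\<^sup>2) * real b"
    unfolding S_def using sum_squared_le_sum_of_squares[of n "{..<b}"] by simp
  also have "\<dots> \<le> 2 * V xc * real b"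
    using V_lb[OF xc] unfolding n_def z_def by (intro mult_right_mono) auto
  finally have i4: "S\<^sup>2 \<le> 2 * V xc * real b" .
  have "S\<^sup>2 / (4 * (real b)\<^sup>2) \<le> 2 * V xc * real b / (4 * (real b)\<^sup>2)"
    using i4 bpos by (intro divide_right_mono) auto
  also have "\<dots> = V xc / (2 * real b)" using bpos by (simp add: power2_eq_square field_simps)
  finally have i5: "S\<^sup>2 / (4 * (real b)\<^sup>2) \<le> V xc / (2 * real b)" .
  show ?thesis using i2 i3 i5 unfolding z_def a_def by linarith
qed

lemma psi_lb:
  assumes xp: "fst s \<in> X" and xc: "snd s \<in> X"
  shows "V (snd s) / 2 \<le> psi s"
proof -
  define Q where "Q = \<gamma> * inner (F (snd s) - F (fst s)) (snd s - xstar) - (nrm (snd s - fst s))\<^sup>2 / 4"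
  have Q: "Q \<le> V (snd s) / (2 * real b)" unfolding Q_def by (rule inner_split_bound[OF xp xc])
  have V0: "V (snd s) \<ge> 0" by (rule V_nonneg[OF xc])
  have "V (snd s) / (2 * real b) \<le> V (snd s) / 2"
    using V0 b by (intro divide_left_mono) auto
  then have Q2: "Q \<le> V (snd s) / 2" using Q by linarith
  have r1: "0 < 1 / rr" "1 / rr \<le> 1" using rr_pos by auto
  have "(1 / rr) * Q \<le> V (snd s) / 2"
  proof (cases "Q \<ge> 0")
    case True
    then have "(1 / rr) * Q \<le> 1 * Q" using r1 by (intro mult_right_mono) auto
    then show ?thesis using Q2 by linarith
  next
    case False
    then have "(1 / rr) * Q \<le> 0" using r1 by (intro mult_nonneg_nonpos) auto
    then show ?thesis using V0 by linarith
  qed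
  moreover have "\<gamma> * cc * Phi (snd s) \<ge> 0" using g_pos cc_ge Phi_nonneg(2)[OF xc] by simp
  ultimately show ?thesis unfolding psi_def Q_def by linarith
qed

end

context sboe begin

lemma step_facts:
  fixes xp :: "real^'n"
  assumes xc: "xc \<in> X" and i: "i < b"
  defines "u \<equiv> prox (Xs i) (\<omega> i) (\<omega>' i) \<gamma> (P i (F xc + lam *\<^sub>R (F xc - F xp))) (P i xc)"
  defines "xn \<equiv> xc - P i xc + u"
  shows "u \<in> Xs i" "P i xn = u" "\<And>j. j \<noteq> i \<Longrightarrow> P j xn = P j xc" "xn \<in> X"
    "xn - xc = u - P i xc" "u - P i xc \<in> blk_space blk i" "step i (xp, xc) = (xc, xn)"
proof -
  show u: "u \<in> Xs i" unfolding u_def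
    using three_point_i[OF i inX[OF xc i] inX[OF xc i]] by blast
  have uS: "u \<in> blk_space blk i" using u Xs_i(3)[OF i] by blast
  show Pi: "P i xn = u" unfolding xn_def by (simp add: bp_add bp_diff bp_bp bp_id[OF uS])
  show Pj: "P j xn = P j xc" if "j \<noteq> i" for j
    unfolding xn_def using that by (simp add: bp_add bp_diff bp_cross bp_other[OF uS])
  show "xn \<in> X"
    unfolding prod_set_def
  proof (intro CollectI allI impI)
    fix j assume j: "j < b"
    show "P j xn \<in> Xs j"
    proof (cases "j = i")
      case True then show ?thesis using Pi u by simp
    next
      case False then show ?thesis using Pj[OF False] inX[OF xc j] by simp
    qed
  qed
  show "xn - xc = u - P i xc" unfolding xn_def by simp
  show "u - P i xc \<in> blk_space blk i" by (rule bs_diff[OF uS bp_in])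
  show "step i (xp, xc) = (xc, xn)" unfolding step_def xn_def u_def by simp
qed

lemma V_step:
  assumes xc: "xc \<in> X" and i: "i < b"
    and Pi: "P i xn = u" and Pj: "\<And>j. j \<noteq> i \<Longrightarrow> P j xn = P j xc"
  shows "V xn = V xc - B i (P i xc) (P i xstar) + B i u (P i xstar)"
proof -
  have "V xn - V xc = (\<Sum>j<b. B j (P j xn) (P j xstar) - B j (P j xc) (P j xstar))"
    by (simp add: V_def' sum_subtractf)
  also have "\<dots> = (\<Sum>j<b. if j = i then B i u (P i xstar) - B i (P i xc) (P i xstar) else 0)"
  proof (intro sum.cong refl)
    fix j assume "j \<in> {..<b}"
    show "B j (P j xn) (P j xstar) - B j (P j xc) (P j xstar)
        = (if j = i then B i u (P i xstar) - B i (P i xc) (P i xstar) else 0)"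
      using Pi Pj[of j] by (cases "j = i") simp_all
  qed
  also have "\<dots> = B i u (P i xstar) - B i (P i xc) (P i xstar)" using i by simp
  finally show ?thesis by linarith
qed

lemma key_i:
  assumes xp: "xp \<in> X" and xc: "xc \<in> X" and i: "i < b"
  shows "rr * psi (step i (xp, xc)) \<le> V xc + \<gamma> * Phi xc
      - \<gamma> * inner (P i (F xc + lam *\<^sub>R (F xc - F xp))) (xc - xstar) + (nrm (xc - xp))\<^sup>2 / (4 * rr)"
proof -
  define g where "g = F xc + lam *\<^sub>R (F xc - F xp)"
  define u where "u = prox (Xs i) (\<omega> i) (\<omega>' i) \<gamma> (P i g) (P i xc)"
  define xn where "xn = xc - P i xc + u"
  note sf = step_facts[OF xc i, where xp = xp, folded g_def, folded u_def, folded xn_def]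
  define z where "z = xc - xstar"
  define d where "d = u - P i xc"
  define a where "a = nrm (xc - xp)"
  define e where "e = N i d"
  define ip where "ip = inner (P i g) z"
  define In where "In = inner (F xn - F xc) (xn - xstar)"
  define ID where "ID = inner (F xc - F xp) d"
  have xn: "xn \<in> X" using sf by blast
  have dS: "d \<in> blk_space blk i" using sf unfolding d_def by blast
  have xnd: "xn - xc = d" using sf unfolding d_def by blast
  have en: "nrm (xn - xc) = e" unfolding e_def xnd by (rule nrm_single[OF i dS])
  have e0: "e \<ge> 0" unfolding e_def by (rule N_nonneg[OF nN[OF i] dS])
  have a0: "a \<ge> 0" unfolding a_def by (rule nrm_nonneg)
  have rr1: "rr \<ge> 1" by (rule rr_pos)
  have TP: "\<gamma> * inner (P i g) (u - P i xstar) + B i (P i xc) u \<le> B i (P i xc) (P i xstar) - B i u (P i xstar)"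
    using three_point_i[OF i inX[OF xc i] inX[OF xstar i], of \<gamma> "P i g"] unfolding u_def by blast
  have VS: "V xn = V xc - B i (P i xc) (P i xstar) + B i u (P i xstar)"
    using V_step[OF xc i] sf by blast
  have Bl: "1/2 * e\<^sup>2 \<le> B i (P i xc) u"
    using breg_lb_i[OF i inX[OF xc i]] sf unfolding e_def d_def by blast
  have dec1: "inner (P i g) (u - P i xstar) = ip + inner g d"
  proof -
    have "u - P i xstar = P i (xn - xstar)" using sf by (simp add: bp_diff)
    then have "inner (P i g) (u - P i xstar) = inner (P i g) (xn - xstar)"
      using inner_bp_left[of blk i g "xn - xstar"] by simp
    also have "xn - xstar = z + d" unfolding z_def using xnd by (simp add: algebra_simps)
    also have "inner (P i g) (z + d) = ip + inner (P i g) d" unfolding ip_def by (simp add: inner_add_right)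
    also have "inner (P i g) d = inner g d"
      using inner_bp_left[of blk i g d] inner_bp_right[of g blk i d] bp_id[OF dS] by simp
    finally show ?thesis .
  qed
  have dec2: "inner g d = inner (F xc) d + lam * ID"
    unfolding g_def ID_def by (simp add: inner_add_left)
  have dec3: "inner (F xc) d = Phi xn - Phi xc - In"
  proof -
    have "Phi xn - Phi xc - In = inner (F xc) (xn - xc)"
      unfolding In_def by (simp add: inner_diff_left inner_diff_right algebra_simps)
    then show ?thesis using xnd by simp
  qed
  have T1: "\<gamma> * ip + \<gamma> * Phi xn - \<gamma> * Phi xc - \<gamma> * In + \<gamma> * (lam * ID) + e\<^sup>2 / 2 \<le> V xc - V xn"
  proof -
    have h: "inner (P i g) (u - P i xstar) = ip + (Phi xn - Phi xc - In) + lam * ID"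
      using dec1 dec2 dec3 by linarith
    have "\<gamma> * inner (P i g) (u - P i xstar) = \<gamma> * ip + \<gamma> * Phi xn - \<gamma> * Phi xc - \<gamma> * In + \<gamma> * (lam * ID)"
      unfolding h by (simp add: algebra_simps)
    then show ?thesis using TP VS Bl by linarith
  qed
  have T2: "\<gamma> * (lam * ID) \<ge> - (a\<^sup>2 / (4 * rr)) - e\<^sup>2 / (4 * rr)"
  proof -
    have l: "\<bar>ID\<bar> \<le> L * a * e" unfolding ID_def a_def e_def by (rule Lip_use[OF xc xp i dS])
    have lam0: "lam \<ge> 0" using lam_eq rr1 by simp
    have gl: "\<gamma> * lam * L = 1 / (2 * rr)"
    proof -
      have "\<gamma> * lam * L = (\<gamma> * L) * lam" by simp
      also have "\<dots> = 1 / (2 * real b) * (real b / rr)" unfolding gL lam_eq ..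
      also have "\<dots> = 1 / (2 * rr)" using b by simp
      finally show ?thesis .
    qed
    have f1: "\<gamma> * (lam * ID) \<ge> - (\<gamma> * lam * (L * a * e))"
    proof -
      have "\<bar>\<gamma> * (lam * ID)\<bar> = \<gamma> * lam * \<bar>ID\<bar>" using g_pos lam0 by (simp add: abs_mult)
      also have "\<dots> \<le> \<gamma> * lam * (L * a * e)" using l g_pos lam0 by (intro mult_left_mono) auto
      finally show ?thesis by linarith
    qed
    have f2: "\<gamma> * lam * (L * a * e) = (\<gamma> * lam * L) * (a * e)" by (simp add: algebra_simps)
    have f3: "(\<gamma> * lam * L) * (a * e) = (a * e) / (2 * rr)" unfolding gl by simp
    have f4: "(a * e) / (2 * rr) \<le> a\<^sup>2 / (4 * rr) + e\<^sup>2 / (4 * rr)"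
    proof -
      have "0 \<le> (a - e)\<^sup>2" by simp
      then have "2 * (a * e) \<le> a\<^sup>2 + e\<^sup>2" by (simp add: power2_eq_square algebra_simps)
      then show ?thesis using rr1 by (simp add: field_simps)
    qed
    show ?thesis using f1 f2 f3 f4 by linarith
  qed
  have T3: "rr * V xn + rr * (\<gamma> * cc * Phi xn) \<le> V xn + \<gamma> * Phi xn"
  proof -
    have k1: "rr - 1 = 2 * \<mu> * \<gamma> * (1 - rr * cc)" using rr_eq by (simp add: algebra_simps)
    have "rr * cc * (1 + 2 * \<mu> * \<gamma> * cc) = cc * (1 + 2 * \<mu> * \<gamma>)" using rr_eq by (metis mult.assoc mult.commute)
    also have "\<dots> \<le> 1 + 2 * \<mu> * \<gamma> * cc" using cc_ge mu g_pos by (simp add: algebra_simps)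
    finally have "rr * cc * (1 + 2 * \<mu> * \<gamma> * cc) \<le> 1 * (1 + 2 * \<mu> * \<gamma> * cc)" by simp
    moreover have "0 < 1 + 2 * \<mu> * \<gamma> * cc" using cc_ge mu g_pos by (simp add: add_pos_nonneg)
    ultimately have "rr * cc \<le> 1" by (rule mult_right_le_imp_le)
    then have k2: "0 \<le> (1 - rr * cc) * \<gamma>" using g_pos by simp
    have k3: "(1 - rr * cc) * \<gamma> * (2 * \<mu> * V xn) \<le> (1 - rr * cc) * \<gamma> * Phi xn"
      using Phi_nonneg(1)[OF xn] k2 by (rule mult_left_mono)
    have k4: "rr * V xn + rr * (\<gamma> * cc * Phi xn) - V xn - \<gamma> * Phi xn
        = (rr - 1) * V xn - (1 - rr * cc) * \<gamma> * Phi xn" by (simp add: algebra_simps)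
    have k5: "(rr - 1) * V xn = (1 - rr * cc) * \<gamma> * (2 * \<mu> * V xn)" unfolding k1 by (simp add: algebra_simps)
    show ?thesis using k3 k4 k5 by linarith
  qed
  have T4: "e\<^sup>2 / (4 * rr) \<le> e\<^sup>2 / 4" using rr1 by (intro divide_left_mono) auto
  have E1: "rr * psi (step i (xp, xc)) = rr * V xn + rr * (\<gamma> * cc * Phi xn) - \<gamma> * In + e\<^sup>2 / 4"
  proof -
    have "step i (xp, xc) = (xc, xn)" using sf by blast
    then have "rr * psi (step i (xp, xc)) = rr * (V xn + \<gamma> * cc * Phi xn - (1 / rr) * (\<gamma> * In - e\<^sup>2 / 4))"
      unfolding psi_def In_def using en by simp
    also have "\<dots> = rr * V xn + rr * (\<gamma> * cc * Phi xn) - \<gamma> * In + e\<^sup>2 / 4"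
      using rr1 by (simp add: algebra_simps)
    finally show ?thesis .
  qed
  show ?thesis
    using E1 T1 T2 T3 T4 unfolding ip_def z_def g_def a_def by linarith
qed

lemma step_avg:
  assumes xp: "xp \<in> X" and xc: "xc \<in> X"
  shows "rr / real b * (\<Sum>i<b. psi (step i (xp, xc))) \<le> psi (xp, xc)"
proof -
  define g where "g = F xc + lam *\<^sub>R (F xc - F xp)"
  define z where "z = xc - xstar"
  define a where "a = nrm (xc - xp)"
  define K where "K = V xc + \<gamma> * Phi xc + a\<^sup>2 / (4 * rr)"
  have bpos: "real b > 0" using b by simp
  have "(\<Sum>i<b. rr * psi (step i (xp, xc))) \<le> (\<Sum>i<b. K - \<gamma> * inner (P i g) z)"
    using key_i[OF xp xc] unfolding K_def g_def z_def a_def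
    by (intro sum_mono) (simp add: algebra_simps)
  also have "\<dots> = real b * K - \<gamma> * inner g z"
  proof -
    have "(\<Sum>i<b. inner (P i g) z) = inner (\<Sum>i<b. P i g) z" by (simp add: inner_sum_left)
    also have "\<dots> = inner g z" using sum_bp[OF blk] by simp
    finally have "(\<Sum>i<b. inner (P i g) z) = inner g z" .
    then show ?thesis by (simp add: sum_subtractf sum_distrib_left[symmetric])
  qed
  finally have S1: "rr * (\<Sum>i<b. psi (step i (xp, xc))) \<le> real b * K - \<gamma> * inner g z"
    by (simp add: sum_distrib_left)
  have ig: "inner g z = Phi xc + lam * inner (F xc - F xp) z"
    unfolding g_def z_def by (simp add: inner_add_left)
  have "rr / real b * (\<Sum>i<b. psi (step i (xp, xc))) = (rr * (\<Sum>i<b. psi (step i (xp, xc)))) / real b"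
    by simp
  also have "\<dots> \<le> (real b * K - \<gamma> * inner g z) / real b"
    using S1 bpos by (intro divide_right_mono) auto
  also have "\<dots> = K - \<gamma> / real b * Phi xc - (\<gamma> * (lam / real b)) * inner (F xc - F xp) z"
    unfolding ig using bpos by (simp add: field_simps)
  also have "\<dots> = psi (xp, xc)"
  proof -
    have l: "lam / real b = 1 / rr" using lam_eq bpos by simp
    have c: "\<gamma> - \<gamma> / real b = \<gamma> * cc" unfolding cc_def using bpos by (simp add: field_simps)
    have r0: "rr > 0" using rr_pos by simp
    have "K - \<gamma> / real b * Phi xc - (\<gamma> * (1 / rr)) * inner (F xc - F xp) z
        = V xc + (\<gamma> - \<gamma> / real b) * Phi xc - (1 / rr) * (\<gamma> * inner (F xc - F xp) z - a\<^sup>2 / 4)"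
      unfolding K_def using r0 by (simp add: field_simps)
    also have "\<dots> = psi (xp, xc)" unfolding c psi_def a_def z_def by simp
    finally show ?thesis unfolding l .
  qed
  finally show ?thesis .
qed

end

lemma pi_fin: "finite (set_pmf (Pi_pmf {1..(k::nat)} d (\<lambda>_. pmf_of_set {..<(b::nat)})))" if "b \<ge> 1"
proof -
  have "set_pmf (Pi_pmf {1..k} d (\<lambda>_. pmf_of_set {..<b})) = PiE_dflt {1..k} d (set_pmf \<circ> (\<lambda>_. pmf_of_set {..<b}))"
    by (rule set_Pi_pmf) simp
  also have "\<dots> = PiE_dflt {1..k} d (\<lambda>_. {..<b})"
  proof -
    have "0 \<in> {..<b}" using that by simp
    then have "set_pmf (pmf_of_set {..<b}) = {..<b}" by (intro set_pmf_of_set) auto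
    then show ?thesis by (simp add: o_def)
  qed
  finally show ?thesis by auto
qed

lemma pi_set: "f \<in> set_pmf (Pi_pmf {1..(k::nat)} d (\<lambda>_. pmf_of_set {..<(b::nat)})) \<Longrightarrow> b \<ge> 1 \<Longrightarrow> t \<in> {1..k} \<Longrightarrow> f t < b"
proof -
  assume f: "f \<in> set_pmf (Pi_pmf {1..k} d (\<lambda>_. pmf_of_set {..<b}))" and b: "b \<ge> 1" and t: "t \<in> {1..k}"
  have "set_pmf (Pi_pmf {1..k} d (\<lambda>_. pmf_of_set {..<b})) = PiE_dflt {1..k} d (set_pmf \<circ> (\<lambda>_. pmf_of_set {..<b}))"
    by (rule set_Pi_pmf) simp
  also have "\<dots> = PiE_dflt {1..k} d (\<lambda>_. {..<b})"
  proof -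
    have "0 \<in> {..<b}" using b by simp
    then have "set_pmf (pmf_of_set {..<b}) = {..<b}" by (intro set_pmf_of_set) auto
    then show ?thesis by (simp add: o_def)
  qed
  finally show "f t < b" using f t by (auto simp: PiE_dflt_def)
qed

lemma pi_induct:
  fixes S :: "nat \<Rightarrow> (nat \<Rightarrow> nat) \<Rightarrow> 's" and Psi :: "'s \<Rightarrow> real" and stp :: "nat \<Rightarrow> 's \<Rightarrow> 's"
    and Inv :: "'s \<Rightarrow> bool" and b :: nat and r :: real
  assumes b: "b \<ge> 1" and r: "r > 0"
    and S0: "\<And>f. S 0 f = s0"
    and SS: "\<And>k f. S (Suc k) f = stp (f (Suc k)) (S k f)"
    and Sdep: "\<And>k f g. (\<And>t. t \<in> {1..k} \<Longrightarrow> f t = g t) \<Longrightarrow> S k f = S k g"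
    and I0: "Inv s0" and IS: "\<And>s i. Inv s \<Longrightarrow> i < b \<Longrightarrow> Inv (stp i s)"
    and avg: "\<And>s. Inv s \<Longrightarrow> r / real b * (\<Sum>i<b. Psi (stp i s)) \<le> Psi s"
  shows "(\<forall>f. (\<forall>t\<in>{1..k}. f t < b) \<longrightarrow> Inv (S k f)) \<and>
    measure_pmf.expectation (Pi_pmf {1..k} d (\<lambda>_. pmf_of_set {..<b})) (\<lambda>f. Psi (S k f)) \<le> Psi s0 / r ^ k"
proof (induction k)
  case 0
  show ?case using I0 S0 by simp
next
  case (Suc k)
  let ?M = "Pi_pmf {1..k} d (\<lambda>_. pmf_of_set {..<b})"
  have inv: "\<forall>f. (\<forall>t\<in>{1..Suc k}. f t < b) \<longrightarrow> Inv (S (Suc k) f)"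
  proof (intro allI impI)
    fix f assume f: "\<forall>t\<in>{1..Suc k}. f t < b"
    then have "Inv (S k f)" using Suc.IH by auto
    moreover have "f (Suc k) < b" using f by auto
    ultimately show "Inv (S (Suc k) f)" using IS SS by simp
  qed
  have fin: "finite (set_pmf ?M)" by (rule pi_fin[OF b])
  have ins: "{1..Suc k} = insert (Suc k) {1..k}" by auto
  have Sup: "S (Suc k) (f(Suc k := a)) = stp a (S k f)" for f a
  proof -
    have "S k (f(Suc k := a)) = S k f" by (rule Sdep) auto
    then show ?thesis using SS by simp
  qed
  have bpos: "real b > 0" using b by simp
  have "0 \<in> {..<b}" using b by simp
  then have nb: "{..<b} \<noteq> {}" by blast
  have "measure_pmf.expectation (Pi_pmf {1..Suc k} d (\<lambda>_. pmf_of_set {..<b})) (\<lambda>f. Psi (S (Suc k) f))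
      = measure_pmf.expectation (pmf_of_set {..<b} \<bind> (\<lambda>y. ?M \<bind> (\<lambda>f. return_pmf (f(Suc k := y)))))
          (\<lambda>f. Psi (S (Suc k) f))"
    unfolding ins by (subst Pi_pmf_insert') auto
  also have "\<dots> = (\<Sum>a<b. pmf (pmf_of_set {..<b}) a *\<^sub>R
      measure_pmf.expectation (?M \<bind> (\<lambda>f. return_pmf (f(Suc k := a)))) (\<lambda>f. Psi (S (Suc k) f)))"
  proof (rule pmf_expectation_bind)
    show "finite {..<b}" by simp
    show "set_pmf (pmf_of_set {..<b}) \<subseteq> {..<b}" using nb by simp
    fix a assume "a \<in> {..<b}"
    have "?M \<bind> (\<lambda>f. return_pmf (f(Suc k := a))) = map_pmf (\<lambda>f. f(Suc k := a)) ?M"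
      by (simp add: map_pmf_def)
    then show "finite (set_pmf (?M \<bind> (\<lambda>f. return_pmf (f(Suc k := a)))))" using fin by simp
  qed
  also have "\<dots> = (\<Sum>a<b. 1 / real b * measure_pmf.expectation ?M (\<lambda>f. Psi (stp a (S k f))))"
  proof (intro sum.cong refl)
    fix a assume a: "a \<in> {..<b}"
    have "?M \<bind> (\<lambda>f. return_pmf (f(Suc k := a))) = map_pmf (\<lambda>f. f(Suc k := a)) ?M"
      by (simp add: map_pmf_def)
    then have "measure_pmf.expectation (?M \<bind> (\<lambda>f. return_pmf (f(Suc k := a)))) (\<lambda>f. Psi (S (Suc k) f))
        = measure_pmf.expectation ?M (\<lambda>f. Psi (stp a (S k f)))" using Sup by simp
    moreover have "pmf (pmf_of_set {..<b}) a = 1 / real b" using a nb by simp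
    ultimately show "pmf (pmf_of_set {..<b}) a *\<^sub>R
      measure_pmf.expectation (?M \<bind> (\<lambda>f. return_pmf (f(Suc k := a)))) (\<lambda>f. Psi (S (Suc k) f))
      = 1 / real b * measure_pmf.expectation ?M (\<lambda>f. Psi (stp a (S k f)))" by simp
  qed
  also have "\<dots> = measure_pmf.expectation ?M (\<lambda>f. 1 / real b * (\<Sum>a<b. Psi (stp a (S k f))))"
    using fin by (simp add: integral_sum integrable_measure_pmf_finite sum_distrib_left)
  also have "\<dots> \<le> measure_pmf.expectation ?M (\<lambda>f. Psi (S k f) / r)"
  proof (rule integral_mono_AE)
    show "integrable (measure_pmf ?M) (\<lambda>f. 1 / real b * (\<Sum>a<b. Psi (stp a (S k f))))"
      using fin by (rule integrable_measure_pmf_finite)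
    show "integrable (measure_pmf ?M) (\<lambda>f. Psi (S k f) / r)"
      using fin by (rule integrable_measure_pmf_finite)
    show "AE f in measure_pmf ?M. 1 / real b * (\<Sum>a<b. Psi (stp a (S k f))) \<le> Psi (S k f) / r"
      unfolding AE_measure_pmf_iff
    proof
      fix f assume "f \<in> set_pmf ?M"
      then have "\<forall>t\<in>{1..k}. f t < b" using pi_set b by blast
      then have "Inv (S k f)" using Suc.IH by blast
      then have "r / real b * (\<Sum>a<b. Psi (stp a (S k f))) \<le> Psi (S k f)" by (rule avg)
      then show "1 / real b * (\<Sum>a<b. Psi (stp a (S k f))) \<le> Psi (S k f) / r"
        using r bpos by (simp add: field_simps)
    qed
  qed
  also have "\<dots> = measure_pmf.expectation ?M (\<lambda>f. Psi (S k f)) / r" by simp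
  also have "\<dots> \<le> Psi s0 / r ^ k / r" using Suc.IH r by (intro divide_right_mono) auto
  also have "\<dots> = Psi s0 / r ^ Suc k" by simp
  finally show ?case using inv by blast
qed


theorem corollary4p1:
  fixes blk :: "'n::finite \<Rightarrow> nat" and b :: nat
    and Xs :: "nat \<Rightarrow> (real^'n) set" and N :: "nat \<Rightarrow> real^'n \<Rightarrow> real"
    and F :: "real^'n \<Rightarrow> real^'n" and L :: real
    and \<omega> :: "nat \<Rightarrow> real^'n \<Rightarrow> real" and \<omega>' :: "nat \<Rightarrow> real^'n \<Rightarrow> real^'n"
    and x1 xstar :: "real^'n" and \<mu> \<gamma> lam :: real and k :: nat
  assumes b: "b \<ge> 1" and blk: "\<forall>j. blk j < b"
    and Xs: "\<forall>i<b. Xs i \<noteq> {} \<and> closed (Xs i) \<and> convex (Xs i) \<and> Xs i \<subseteq> blk_space blk i"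
    and norms: "\<forall>i<b. is_norm_on (blk_space blk i) (N i)"
    and L: "L > 0"
    and Lip: "\<forall>i<b. \<forall>x\<in>prod_set blk b Xs. \<forall>y\<in>prod_set blk b Xs.
               dual_norm (blk_space blk i) (N i) (blk_proj blk i (F x) - blk_proj blk i (F y))
                 \<le> L * blk_norm b blk N (x - y)"
    and deriv: "\<forall>i<b. \<forall>u\<in>Xs i. (\<omega> i has_derivative (\<lambda>h. inner (\<omega>' i u) h)) (at u within Xs i)"
    and sc: "\<forall>i<b. strongly_convex1 (Xs i) (N i) (\<omega> i) (\<omega>' i)"
    and x1: "x1 \<in> prod_set blk b Xs"
    and xstar: "xstar \<in> prod_set blk b Xs"
    and VI: "\<forall>x\<in>prod_set blk b Xs. inner (F xstar) (x - xstar) \<ge> 0"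
    and mu: "\<mu> > 0"
    and growth: "\<forall>x\<in>prod_set blk b Xs. inner (F x) (x - xstar) \<ge> 2 * \<mu> * blk_V b blk \<omega> \<omega>' x xstar"
    and gamma: "\<gamma> = 1 / (2 * L * real b)"
    and lambda: "lam = (real b + 2 * (real b - 1) * \<mu> * \<gamma>) / (1 + 2 * \<mu> * \<gamma>)"
  shows "measure_pmf.expectation (Pi_pmf {1..k} undefined (\<lambda>_. pmf_of_set {..<b}))
           (\<lambda>seq. blk_V b blk \<omega> \<omega>'
              (sboe_next blk Xs \<omega> \<omega>' F (\<lambda>_. \<gamma>) (\<lambda>_. lam) x1 seq k) xstar)
         \<le> 2 * ((1 + 2 * \<mu> * ((real b - 1) / real b) * \<gamma>) / (1 + 2 * \<mu> * \<gamma>)) ^ k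
             * (blk_V b blk \<omega> \<omega>' x1 xstar
                + ((real b - 1) / real b) * \<gamma> * inner (F x1) (x1 - xstar))"
proof -
  interpret sboe blk b Xs N F L \<omega> \<omega>' xstar \<mu> \<gamma> lam
    using b blk Xs norms L Lip deriv sc xstar mu growth gamma lambda by unfold_locales auto
  define S where "S = (\<lambda>k seq. sboe_st blk Xs \<omega> \<omega>' F (\<lambda>_. \<gamma>) (\<lambda>_. lam) x1 seq k)"
  define Inv where "Inv = (\<lambda>s::(real^'n) \<times> (real^'n). fst s \<in> X \<and> snd s \<in> X)"
  have S0: "S 0 f = (x1, x1)" for f by (simp add: S_def)
  have SS: "S (Suc k) f = step (f (Suc k)) (S k f)" for k f
    by (simp add: S_def step_def Let_def case_prod_beta)
  have Sdep: "S k f = S k g" if "\<And>t. t \<in> {1..k} \<Longrightarrow> f t = g t" for k f g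
    using that
  proof (induction k)
    case 0 then show ?case by (simp add: S0)
  next
    case (Suc k)
    have "S k f = S k g" using Suc by auto
    moreover have "f (Suc k) = g (Suc k)" using Suc.prems by auto
    ultimately show ?case by (simp add: SS)
  qed
  have I0: "Inv (x1, x1)" using x1 by (simp add: Inv_def)
  have IS: "Inv (step i s)" if "Inv s" "i < b" for s i
  proof -
    have "snd s \<in> X" using that by (simp add: Inv_def)
    then have "step i (fst s, snd s) = (snd s, snd s - P i (snd s) + prox (Xs i) (\<omega> i) (\<omega>' i) \<gamma> (P i (F (snd s) + lam *\<^sub>R (F (snd s) - F (fst s)))) (P i (snd s)))"
      and "snd s - P i (snd s) + prox (Xs i) (\<omega> i) (\<omega>' i) \<gamma> (P i (F (snd s) + lam *\<^sub>R (F (snd s) - F (fst s)))) (P i (snd s)) \<in> X"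
      using step_facts[OF \<open>snd s \<in> X\<close> \<open>i < b\<close>, where xp = "fst s"] by auto
    then show ?thesis using \<open>snd s \<in> X\<close> by (simp add: Inv_def)
  qed
  have avg: "rr / real b * (\<Sum>i<b. psi (step i s)) \<le> psi s" if "Inv s" for s
    using step_avg[of "fst s" "snd s"] that by (simp add: Inv_def)
  have rpos: "rr > 0" using rr_pos by simp
  note PI = pi_induct[of b rr S "(x1, x1)" step Inv psi k undefined, OF b rpos S0 SS Sdep I0 IS avg]
  let ?M = "Pi_pmf {1..k} undefined (\<lambda>_. pmf_of_set {..<b})"
  have fin: "finite (set_pmf ?M)" by (rule pi_fin[OF b])
  have E1: "measure_pmf.expectation ?M (\<lambda>f. psi (S k f)) \<le> psi (x1, x1) / rr ^ k" using PI by blast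
  have E2: "measure_pmf.expectation ?M (\<lambda>seq. V (sboe_next blk Xs \<omega> \<omega>' F (\<lambda>_. \<gamma>) (\<lambda>_. lam) x1 seq k))
      \<le> measure_pmf.expectation ?M (\<lambda>f. 2 * psi (S k f))"
  proof (rule integral_mono_AE)
    show "integrable (measure_pmf ?M) (\<lambda>seq. V (sboe_next blk Xs \<omega> \<omega>' F (\<lambda>_. \<gamma>) (\<lambda>_. lam) x1 seq k))"
      using fin by (rule integrable_measure_pmf_finite)
    show "integrable (measure_pmf ?M) (\<lambda>f. 2 * psi (S k f))"
      using fin by (rule integrable_measure_pmf_finite)
    show "AE f in measure_pmf ?M. V (sboe_next blk Xs \<omega> \<omega>' F (\<lambda>_. \<gamma>) (\<lambda>_. lam) x1 f k) \<le> 2 * psi (S k f)"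
      unfolding AE_measure_pmf_iff
    proof
      fix f assume "f \<in> set_pmf ?M"
      then have "\<forall>t\<in>{1..k}. f t < b" using pi_set b by blast
      then have "Inv (S k f)" using PI by blast
      then have "V (snd (S k f)) / 2 \<le> psi (S k f)" using psi_lb by (simp add: Inv_def)
      then show "V (sboe_next blk Xs \<omega> \<omega>' F (\<lambda>_. \<gamma>) (\<lambda>_. lam) x1 f k) \<le> 2 * psi (S k f)"
        by (simp add: sboe_next_def S_def)
    qed
  qed
  have nrm0: "nrm 0 = 0"
  proof -
    have "(\<Sum>j<b. (N j (P j 0))\<^sup>2) = 0"
      by (intro sum.neutral ballI) (simp add: bp_zero N_zero[OF nN])
    then show ?thesis by (simp add: blk_norm_def)
  qed
  have psi0: "psi (x1, x1) = V x1 + cc * \<gamma> * Phi x1" unfolding psi_def using nrm0 by simp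
  have q: "(1 + 2 * \<mu> * ((real b - 1) / real b) * \<gamma>) / (1 + 2 * \<mu> * \<gamma>) = 1 / rr"
    unfolding rr_def cc_def by (simp add: algebra_simps)
  have "measure_pmf.expectation ?M (\<lambda>seq. V (sboe_next blk Xs \<omega> \<omega>' F (\<lambda>_. \<gamma>) (\<lambda>_. lam) x1 seq k))
      \<le> 2 * (psi (x1, x1) / rr ^ k)" using E1 E2 by simp
  also have "\<dots> = 2 * ((1 + 2 * \<mu> * ((real b - 1) / real b) * \<gamma>) / (1 + 2 * \<mu> * \<gamma>)) ^ k
             * (V x1 + ((real b - 1) / real b) * \<gamma> * inner (F x1) (x1 - xstar))"
    unfolding q psi0 cc_def by (simp add: power_one_over field_simps)
  finally show ?thesis .
qed


end
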